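(* Let $T_\mathrm{i}>T_\mathrm{o}^{\mathrm{OA}}>0$, $U_\mathrm{i}>0$, $U_\mathrm{o}>0$, $\Omega_\mathrm{c}\ge 0$, $\Omega_\mathrm{h}\ge 0$ and $\varepsilon\in[0,1]$. For $\eta\in[0,1]$ set $\overline{T}_\mathrm{h}(\eta)=\frac{\eta T_\mathrm{i}}{U_\mathrm{i}}$ and $\overline{T}_\mathrm{c}(\eta)=\frac{(1-\eta)T_\mathrm{o}^{\mathrm{OA}}}{U_\mathrm{o}}$, and consider the problem $$\max_{0\le\eta\le1}\ \eta T_\mathrm{i}+(1-\eta)T_\mathrm{o}^{\mathrm{OA}}\quad\text{subject to}\quad \overline{T}_\mathrm{c}(\eta)\ge\Omega_\mathrm{c},\ \ \overline{T}_\mathrm{h}(\eta)\ge\Omega_\mathrm{h},\ \ \overline{T}_\mathrm{c}(\eta)\ge\varepsilon\,\overline{T}_\mathrm{h}(\eta).$$ Let $$\eta^\ast=\min\left(1-\frac{\Omega_\mathrm{c}U_\mathrm{o}}{T_\mathrm{o}^{\mathrm{OA}}},\ \left(1+\varepsilon\frac{U_\mathrm{o}T_\mathrm{i}}{U_\mathrm{i}T_\mathrm{o}^{\mathrm{OA}}}\right)^{-1}\right).$$ If $\eta^\ast\ge\frac{\Omega_\mathrm{h}U_\mathrm{i}}{T_\mathrm{i}}$, then $\eta^\ast$ is feasible and is an optimal solution of the problem.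
   Context: Interpretation: in shared access a femtocell access point allocates a fraction $\eta$ of its time slots to its $U_\mathrm{i}$ home users (zone throughput $T_\mathrm{i}$) and $1-\eta$ to $U_\mathrm{o}$ neighboring cellular users (zone throughput $T_\mathrm{o}^{\mathrm{OA}}$); $\Omega_\mathrm{c},\Omega_\mathrm{h}$ are minimum per-user throughputs and $\varepsilon$ a fairness parameter. *)

theory Defs
  imports Complex_Main
begin

definition Th_bar :: "real \<Rightarrow> real \<Rightarrow> real \<Rightarrow> real" where
  "Th_bar Ti Ui \<eta> = \<eta> * Ti / Ui"

definition Tc_bar :: "real \<Rightarrow> real \<Rightarrow> real \<Rightarrow> real" where
  "Tc_bar To Uo \<eta> = (1 - \<eta>) * To / Uo"

definition objective :: "real \<Rightarrow> real \<Rightarrow> real \<Rightarrow> real" where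
  "objective Ti To \<eta> = \<eta> * Ti + (1 - \<eta>) * To"

definition feasible ::
  "real \<Rightarrow> real \<Rightarrow> real \<Rightarrow> real \<Rightarrow> real \<Rightarrow> real \<Rightarrow> real \<Rightarrow> real \<Rightarrow> bool" where
  "feasible Ti To Ui Uo \<Omega>c \<Omega>h \<epsilon> \<eta> \<longleftrightarrow>
     0 \<le> \<eta> \<and> \<eta> \<le> 1 \<and>
     Tc_bar To Uo \<eta> \<ge> \<Omega>c \<and>
     Th_bar Ti Ui \<eta> \<ge> \<Omega>h \<and>
     Tc_bar To Uo \<eta> \<ge> \<epsilon> * Th_bar Ti Ui \<eta>"

end

theory Submission
  imports Defs
begin

theorem proposition1:
  fixes Ti To Ui Uo \<Omega>c \<Omega>h \<epsilon> \<eta>s :: real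
  assumes "Ti > To" and "To > 0" and "Ui > 0" and "Uo > 0"
    and "\<Omega>c \<ge> 0" and "\<Omega>h \<ge> 0" and "0 \<le> \<epsilon>" and "\<epsilon> \<le> 1"
    and "\<eta>s = min (1 - \<Omega>c * Uo / To) (inverse (1 + \<epsilon> * (Uo * Ti) / (Ui * To)))"
    and "\<eta>s \<ge> \<Omega>h * Ui / Ti"
  shows "feasible Ti To Ui Uo \<Omega>c \<Omega>h \<epsilon> \<eta>s \<and>
         (\<forall>\<eta>. feasible Ti To Ui Uo \<Omega>c \<Omega>h \<epsilon> \<eta> \<longrightarrow> objective Ti To \<eta> \<le> objective Ti To \<eta>s)"
proof -
  note a = assms
  define k where "k = \<epsilon> * (Uo * Ti) / (Ui * To)"
  have k0: "k \<ge> 0" using a unfolding k_def by simp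
  have inv: "inverse (1 + k) = 1 / (1 + k)" by (simp add: divide_inverse)
  have C: "Tc_bar To Uo \<eta> \<ge> \<Omega>c \<longleftrightarrow> \<eta> \<le> 1 - \<Omega>c * Uo / To" for \<eta>
    using a unfolding Tc_bar_def by (simp add: field_simps)
  have F: "Tc_bar To Uo \<eta> \<ge> \<epsilon> * Th_bar Ti Ui \<eta> \<longleftrightarrow> \<eta> \<le> inverse (1 + k)" for \<eta>
  proof -
    have "Tc_bar To Uo \<eta> \<ge> \<epsilon> * Th_bar Ti Ui \<eta> \<longleftrightarrow> (1 - \<eta>) * To * Ui \<ge> \<epsilon> * \<eta> * Ti * Uo"
      using a unfolding Tc_bar_def Th_bar_def by (simp add: field_simps)
    also have "\<dots> \<longleftrightarrow> \<eta> * (1 + k) \<le> 1"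
      using a unfolding k_def by (simp add: field_simps)
    also have "\<dots> \<longleftrightarrow> \<eta> \<le> inverse (1 + k)"
      using k0 by (simp add: inv pos_le_divide_eq)
    finally show ?thesis .
  qed
  have H: "Th_bar Ti Ui \<eta> \<ge> \<Omega>h \<longleftrightarrow> \<eta> \<ge> \<Omega>h * Ui / Ti" for \<eta>
    using a unfolding Th_bar_def by (simp add: field_simps)
  have s: "\<eta>s = min (1 - \<Omega>c * Uo / To) (inverse (1 + k))" using a k_def by simp
  have le1: "inverse (1 + k) \<le> 1" using k0 by (simp add: inv)
  have ge0: "\<eta>s \<ge> 0" using a(10) a by (meson order_trans divide_nonneg_pos mult_nonneg_nonneg less_imp_le less_trans)
  have feas: "feasible Ti To Ui Uo \<Omega>c \<Omega>h \<epsilon> \<eta>s"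
    unfolding feasible_def using C F H ge0 le1 s a(10) by auto
  have opt: "objective Ti To \<eta> \<le> objective Ti To \<eta>s" if "feasible Ti To Ui Uo \<Omega>c \<Omega>h \<epsilon> \<eta>" for \<eta>
  proof -
    have "\<eta> \<le> \<eta>s" using that C F s unfolding feasible_def by auto
    then have "\<eta> * (Ti - To) \<le> \<eta>s * (Ti - To)" using a by (intro mult_right_mono) auto
    then show ?thesis unfolding objective_def by (simp add: algebra_simps)
  qed
  show ?thesis using feas opt by blast
qed

end
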